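(* Consider the $[\![15,7,3]\!]$ Hamming code and the qubit permutation $\sigma_3 = (1,10,15,3,8,13)(4,6)(5,12,11)(7,14,9)$. Let $U = \prod_{i:\,\sigma_3(i)\ne i}\mathrm{CZ}_{i,\sigma_3(i)}$ (so the two gates from the 2-cycle $(4,6)$ cancel). Then there is a product $P$ of Pauli $Z$ operators such that $PU$ preserves the code space, and, up to a logical Pauli operator and global phase, $PU$ acts on the code space as the product of logical $\mathrm{CZ}$ gates $\overline{\mathrm{CZ}}_{2,3}\overline{\mathrm{CZ}}_{3,4}\overline{\mathrm{CZ}}_{4,5}\overline{\mathrm{CZ}}_{5,6}\overline{\mathrm{CZ}}_{6,7}\overline{\mathrm{CZ}}_{7,2}$ (logical $\mathrm{CZ}$ gates following the cycle $(2,3,4,5,6,7)$, with logical qubit 1 untouched).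
   Context: The $[\![15,7,3]\!]$ Hamming code: index physical qubits $1,\dots,15$, and for $b\in\{1,2,4,8\}$ let $R_b = \{i\in\{1,\dots,15\} : \text{the binary expansion of } i \text{ contains } b\}$. The stabilizer group is generated by $X_{R_b}$ and $Z_{R_b}$, $b\in\{1,2,4,8\}$. Logical operators are $\bar X_j = X_{T_j}$, $\bar Z_j = Z_{T_j}$ with $T_1=\{1,2,4,8,15\}$, $T_2=\{1,2,5,10,12\}$, $T_3=\{1,2,6,11,14\}$, $T_4=\{1,2,7,9,13\}$, $T_5=\{1,4,6,9,10\}$, $T_6=\{1,4,7,12,14\}$, $T_7=\{1,8,10,13,14\}$. $\mathrm{CZ}_{a,b} = \mathbb 1 - 2|11\rangle\langle 11|$ on qubits $a,b$. *)

theory Defs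
  imports Complex_Main
begin

text \<open>Computational basis states of qubits 1..15 are indexed by subsets x of {1..15}
(the set of qubits in state 1). A state is a function from basis labels to amplitudes,
supported on subsets of {1..15}.\<close>

type_synonym state = "nat set \<Rightarrow> complex"

definition qubits :: "nat set" where "qubits = {1..15}"

definition is_state :: "state \<Rightarrow> bool" where
  "is_state \<psi> \<longleftrightarrow> (\<forall>x. \<not> x \<subseteq> qubits \<longrightarrow> \<psi> x = 0)"

definition Xop :: "nat set \<Rightarrow> state \<Rightarrow> state" where
  "Xop R \<psi> = (\<lambda>x. \<psi> ((x - R) \<union> (R - x)))"

definition Zop :: "nat set \<Rightarrow> state \<Rightarrow> state" where
  "Zop R \<psi> = (\<lambda>x. (-1) ^ card (x \<inter> R) * \<psi> x)"

definition CZop :: "nat \<Rightarrow> nat \<Rightarrow> state \<Rightarrow> state" where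
  "CZop a b \<psi> = (\<lambda>x. (if a \<in> x \<and> b \<in> x then -1 else 1) * \<psi> x)"

definition Rset :: "nat \<Rightarrow> nat set" where
  "Rset b = {i \<in> {1..15}. odd (i div b)}"

definition codespace :: "state set" where
  "codespace = {\<psi>. is_state \<psi> \<and>
     (\<forall>b \<in> {1,2,4,8}. Xop (Rset b) \<psi> = \<psi> \<and> Zop (Rset b) \<psi> = \<psi>)}"

definition Tset :: "nat \<Rightarrow> nat set" where
  "Tset j = (if j = 1 then {1,2,4,8,15}
        else if j = 2 then {1,2,5,10,12}
        else if j = 3 then {1,2,6,11,14}
        else if j = 4 then {1,2,7,9,13}
        else if j = 5 then {1,4,6,9,10}
        else if j = 6 then {1,4,7,12,14}
        else if j = 7 then {1,8,10,13,14} else {})"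

definition LX :: "nat \<Rightarrow> state \<Rightarrow> state" where "LX j = Xop (Tset j)"
definition LZ :: "nat \<Rightarrow> state \<Rightarrow> state" where "LZ j = Zop (Tset j)"

definition logical_pauli :: "(nat \<Rightarrow> bool) \<Rightarrow> (nat \<Rightarrow> bool) \<Rightarrow> state \<Rightarrow> state" where
  "logical_pauli a b = foldr (\<circ>)
     (map (\<lambda>j. (if a j then LX j else id) \<circ> (if b j then LZ j else id)) [1..<8]) id"

text \<open>Logical CZ: (1 + Zbar_a + Zbar_b - Zbar_a Zbar_b)/2, i.e. 1 - 2 |11><11| logically.\<close>
definition LCZ :: "nat \<Rightarrow> nat \<Rightarrow> state \<Rightarrow> state" where
  "LCZ a b \<psi> = (\<lambda>x. (\<psi> x + LZ a \<psi> x + LZ b \<psi> x - LZ a (LZ b \<psi>) x) / 2)"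

definition sigma3 :: "nat \<Rightarrow> nat" where
  "sigma3 i = (if i = 1 then 10 else if i = 10 then 15 else if i = 15 then 3
     else if i = 3 then 8 else if i = 8 then 13 else if i = 13 then 1
     else if i = 4 then 6 else if i = 6 then 4
     else if i = 5 then 12 else if i = 12 then 11 else if i = 11 then 5
     else if i = 7 then 14 else if i = 14 then 9 else if i = 9 then 7 else i)"

definition Uop :: "state \<Rightarrow> state" where
  "Uop = foldr (\<circ>) (map (\<lambda>i. CZop i (sigma3 i)) (filter (\<lambda>i. sigma3 i \<noteq> i) [1..<16])) id"

end

theory Submission
  imports Defs
begin

definition sg :: "bool \<Rightarrow> complex" where "sg P = (if P then -1 else 1)"

lemma sg_mult[simp]: "sg a * sg b = sg (a \<noteq> b)" by (simp add: sg_def)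
lemma sg_mult2[simp]: "sg a * (sg b * y) = sg (a \<noteq> b) * y" by (simp add: sg_def)

lemma card_par_insert[simp]:
  "finite A \<Longrightarrow> a \<notin> A \<Longrightarrow> odd (card (x \<inter> insert a A)) = ((a \<in> x) \<noteq> odd (card (x \<inter> A)))"
  by (cases "a \<in> x") (auto simp: Int_insert_left)

lemma minus_one_card: "(-1::complex) ^ card X = sg (odd (card X))"
  by (simp add: sg_def)

lemma Zop_eq: "Zop A \<psi> = (\<lambda>x. sg (odd (card (x \<inter> A))) * \<psi> x)"
  by (simp add: Zop_def minus_one_card)

lemma CZop_eq: "CZop a b \<psi> = (\<lambda>x. sg (a \<in> x \<and> b \<in> x) * \<psi> x)"
  by (simp add: CZop_def sg_def)

lemma LCZ_eq: "LCZ a b \<phi> = (\<lambda>x. sg (odd (card (x \<inter> Tset a)) \<and> odd (card (x \<inter> Tset b))) * \<phi> x)"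
  by (rule ext) (simp add: LCZ_def LZ_def Zop_eq sg_def field_simps)

lemma upt16: "[1..<16] = [1,2,3,4,5,6,7,8,9,10,11,12,13,14,15::nat]"
  by (simp add: upt_rec numeral_eq_Suc)
lemma upt8: "[1..<8] = [1,2,3,4,5,6,7::nat]"
  by (simp add: upt_rec numeral_eq_Suc)

lemma Rset_list: "Rset b = set (filter (\<lambda>i. odd (i div b)) [1..<16])"
  by (auto simp: Rset_def)

lemma Rsets: "Rset 1 = {1,3,5,7,9,11,13,15}" "Rset 2 = {2,3,6,7,10,11,14,15}"
  "Rset 4 = {4,5,6,7,12,13,14,15}" "Rset 8 = {8,9,10,11,12,13,14,15}"
  by (unfold Rset_list upt16; simp; blast)+


lemma Uop_eq: "Uop \<psi> = (\<lambda>x. sg ((1 \<in> x \<and> 10 \<in> x) =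
              ((3 \<in> x \<and> 8 \<in> x) =
               ((4 \<in> x \<and> 6 \<in> x) =
                ((5 \<in> x \<and> 12 \<in> x) =
                 ((6 \<in> x \<and> 4 \<in> x) =
                  ((7 \<in> x \<and> 14 \<in> x) =
                   ((8 \<in> x \<and> 13 \<in> x) =
                    ((9 \<in> x \<and> 7 \<in> x) =
                     ((10 \<in> x \<and> 15 \<in> x) =
                      ((11 \<in> x \<and> 5 \<in> x) =
                       ((12 \<in> x \<and> 11 \<in> x) =
                        ((13 \<in> x \<and> 1 \<in> x) =
                         ((14 \<in> x \<and> 9 \<in> x) = (15 \<in> x \<longrightarrow> 3 \<notin> x)))))))))))))) * \<psi> x)"
  unfolding Uop_def upt16 by (simp add: sigma3_def CZop_eq)

lemma Rset1': "Rset (Suc 0) = {1,3,5,7,9,11,13,15}" using Rsets(1) by simp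

lemma sg_cancel: "y \<noteq> 0 \<Longrightarrow> (sg A * y = sg B * y) = (A = B)"
  by (simp add: sg_def)

lemma sg_cancel1: "y \<noteq> 0 \<Longrightarrow> (sg A * y = y) = (\<not> A)"
  by (auto simp: sg_def)

lemma main_diag:
  assumes "\<psi> \<in> codespace"
  shows "Zop {2} (Uop \<psi>) = (\<lambda>x. 1 * logical_pauli (\<lambda>_. False) (\<lambda>_. True)
              ((LCZ 2 3 \<circ> LCZ 3 4 \<circ> LCZ 4 5 \<circ> LCZ 5 6 \<circ> LCZ 6 7 \<circ> LCZ 7 2) \<psi>) x)"
proof (rule ext)
  fix x
  show "Zop {2} (Uop \<psi>) x = 1 * logical_pauli (\<lambda>_. False) (\<lambda>_. True)
              ((LCZ 2 3 \<circ> LCZ 3 4 \<circ> LCZ 4 5 \<circ> LCZ 5 6 \<circ> LCZ 6 7 \<circ> LCZ 7 2) \<psi>) x"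
  proof (cases "\<psi> x = 0")
    case True
    then show ?thesis unfolding logical_pauli_def upt8
      by (simp add: Uop_eq Zop_eq LZ_def LCZ_eq)
  next
    case False
    have z: "Zop (Rset b) \<psi> x = \<psi> x" if "b \<in> {1,2,4,8}" for b
      using assms that unfolding codespace_def by auto
    have c1: "\<not> odd (card (x \<inter> Rset 1))" using z[of 1] False by (simp add: Zop_eq sg_def split: if_splits)
    have c2: "\<not> odd (card (x \<inter> Rset 2))" using z[of 2] False by (simp add: Zop_eq sg_def split: if_splits)
    have c4: "\<not> odd (card (x \<inter> Rset 4))" using z[of 4] False by (simp add: Zop_eq sg_def split: if_splits)
    have c8: "\<not> odd (card (x \<inter> Rset 8))" using z[of 8] False by (simp add: Zop_eq sg_def split: if_splits)
    note cs = c1 c2 c4 c8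
    then show ?thesis unfolding logical_pauli_def upt8 Rsets
      apply (simp add: Uop_eq Zop_eq LZ_def LCZ_eq Tset_def sg_cancel False)
      apply (rule arg_cong[where f=sg])
      apply argo
      done
  qed
qed


lemma Xinv:
  assumes cs: "\<psi> \<in> codespace" and bb: "b \<in> {1,2,4,8}"
  shows "Xop (Rset b) (Zop {2} (Uop \<psi>)) = Zop {2} (Uop \<psi>)"
proof (rule ext)
  fix x
  have xh: "Xop (Rset b) \<psi> = \<psi>" using cs bb unfolding codespace_def by auto
  have xs: "\<psi> ((x - Rset b) \<union> (Rset b - x)) = \<psi> x"
    using fun_cong[OF xh, of x] by (simp add: Xop_def)
  show "Xop (Rset b) (Zop {2} (Uop \<psi>)) x = Zop {2} (Uop \<psi>) x"
  proof (cases "\<psi> x = 0")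
    case True
    then show ?thesis by (simp add: Xop_def Uop_eq Zop_eq xs)
  next
    case False
    have z: "Zop (Rset b) \<psi> x = \<psi> x" if "b \<in> {1,2,4,8}" for b
      using cs that unfolding codespace_def by auto
    have c1: "\<not> odd (card (x \<inter> Rset 1))" using z[of 1] False by (simp add: Zop_eq sg_def split: if_splits)
    have c2: "\<not> odd (card (x \<inter> Rset 2))" using z[of 2] False by (simp add: Zop_eq sg_def split: if_splits)
    have c4: "\<not> odd (card (x \<inter> Rset 4))" using z[of 4] False by (simp add: Zop_eq sg_def split: if_splits)
    have c8: "\<not> odd (card (x \<inter> Rset 8))" using z[of 8] False by (simp add: Zop_eq sg_def split: if_splits)
    have bc: "b = 1 \<or> b = 2 \<or> b = 4 \<or> b = 8" using bb by auto
    have key: "Zop {2} (Uop \<psi>) ((x - Rset b) \<union> (Rset b - x)) = Zop {2} (Uop \<psi>) x"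
      using bc c1 c2 c4 c8 xs unfolding Rsets
      apply (elim disjE)
         apply (simp_all add: Uop_eq Zop_eq sg_cancel False Rsets Rset1')
      apply (rule arg_cong[where f=sg], argo)+
      done
    then show ?thesis by (simp add: Xop_def)
  qed
qed


lemma Zop_comm: "Zop A (Zop B \<phi>) = Zop B (Zop A \<phi>)"
  by (simp add: Zop_def mult_ac)

lemma Zop_Uop: "Zop A (Uop \<psi>) = Uop (Zop A \<psi>)"
  by (simp add: Zop_def Uop_eq mult_ac)

lemma preserve:
  assumes cs: "\<psi> \<in> codespace"
  shows "Zop {2} (Uop \<psi>) \<in> codespace"
proof -
  have st: "is_state \<psi>" using cs by (simp add: codespace_def)
  have "is_state (Zop {2} (Uop \<psi>))"
    using st by (simp add: is_state_def Zop_eq Uop_eq)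
  moreover have "Xop (Rset b) (Zop {2} (Uop \<psi>)) = Zop {2} (Uop \<psi>)" if "b \<in> {1,2,4,8}" for b
    using Xinv[OF cs that] .
  moreover have "Zop (Rset b) (Zop {2} (Uop \<psi>)) = Zop {2} (Uop \<psi>)" if "b \<in> {1,2,4,8}" for b
  proof -
    have "Zop (Rset b) \<psi> = \<psi>" using cs that unfolding codespace_def by auto
    then show ?thesis by (simp only: Zop_comm[of "Rset b" "{2}"] Zop_Uop[of "Rset b"])
  qed
  ultimately show ?thesis unfolding codespace_def by blast
qed

theorem mainTheorem9:
  shows "\<exists>S \<subseteq> qubits.
     (\<forall>\<psi> \<in> codespace. Zop S (Uop \<psi>) \<in> codespace) \<and>
     (\<exists>(a :: nat \<Rightarrow> bool) (b :: nat \<Rightarrow> bool) (c :: complex). cmod c = 1 \<and>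
        (\<forall>\<psi> \<in> codespace. Zop S (Uop \<psi>) =
           (\<lambda>x. c * logical_pauli a b
              ((LCZ 2 3 \<circ> LCZ 3 4 \<circ> LCZ 4 5 \<circ> LCZ 5 6 \<circ> LCZ 6 7 \<circ> LCZ 7 2) \<psi>) x)))"
proof -
  have q: "{2} \<subseteq> qubits" by (simp add: qubits_def)
  have p: "\<forall>\<psi> \<in> codespace. Zop {2} (Uop \<psi>) \<in> codespace" using preserve by blast
  have e: "\<exists>(a :: nat \<Rightarrow> bool) (b :: nat \<Rightarrow> bool) (c :: complex). cmod c = 1 \<and>
        (\<forall>\<psi> \<in> codespace. Zop {2} (Uop \<psi>) =
           (\<lambda>x. c * logical_pauli a b
              ((LCZ 2 3 \<circ> LCZ 3 4 \<circ> LCZ 4 5 \<circ> LCZ 5 6 \<circ> LCZ 6 7 \<circ> LCZ 7 2) \<psi>) x))"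
    apply (rule exI[of _ "\<lambda>_. False"], rule exI[of _ "\<lambda>_. True"], rule exI[of _ 1])
    using main_diag by simp
  show ?thesis using q p e by blast
qed

end
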